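(* Let $(\mathcal{H},\mathbf{a})$ be a weighted arrangement in $\mathbb{CP}^n$ with all $a_H>0$. The following are equivalent: (i) $\sum_{H\supset L}a_H<\operatorname{codim}L$ for every $L\in\mathcal{L}_{\mathrm{irr}}$; (ii) the same inequality holds for every $L\in\mathcal{L}$; (iii) the same inequality holds for every non-empty proper linear subspace $L\subsetneq\mathbb{CP}^n$.
   Context: $\mathcal{H}$ is a finite set of distinct hyperplanes in $\mathbb{CP}^n$; $\mathcal{L}$ is the set of non-empty proper intersections of members of $\mathcal{H}$. For $L\in\mathcal{L}$, the localization $\mathcal{H}_L=\{H\in\mathcal{H}:L\subset H\}$. A splitting of an arrangement $\mathcal{K}$ is a decomposition $\mathcal{K}=\mathcal{K}_1\cup\mathcal{K}_2$ whose centres (intersections of members; $\mathbb{CP}^n$ for the empty collection) $T_1,T_2$ satisfy $T_1+T_2=\mathbb{CP}^n$ (projective span); it is non-trivial if both parts are non-empty; $\mathcal{K}$ is irreducible if it has no non-trivial splitting. $L\in\mathcal{L}$ is irreducible if $\mathcal{H}_L$ is irreducible, and $\mathcal{L}_{\mathrm{irr}}$ is the set of irreducible elements of $\mathcal{L}$. *)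

theory Defs
  imports "HOL-Analysis.Analysis"
begin

text \<open>CP^n is modelled as the projectivisation of the complex vector space complex^'N,
with CARD('N) = n+1. A projective linear subspace corresponds to a complex-linear
subspace V of complex^'N; it is non-empty iff V is not the zero subspace; the whole
space CP^n corresponds to UNIV.\<close>

type_synonym 'N cvec = "complex ^ 'N"

definition proj_subspace :: "'N::finite cvec set \<Rightarrow> bool" where
  "proj_subspace V \<longleftrightarrow> vec.subspace V \<and> V \<noteq> {0}"

definition proj_hyperplane :: "'N::finite cvec set \<Rightarrow> bool" where
  "proj_hyperplane H \<longleftrightarrow> vec.subspace H \<and> vec.dim H = CARD('N) - 1"

text \<open>Projective codimension: n - dim_proj L = CARD('N) - dim V.\<close>
definition codim :: "'N::finite cvec set \<Rightarrow> nat" where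
  "codim L = CARD('N) - vec.dim L"

text \<open>Centre of a collection (intersection of its members; whole space for the empty one).\<close>
definition centre :: "'N::finite cvec set set \<Rightarrow> 'N cvec set" where
  "centre K = \<Inter> K"

text \<open>Projective span of two subspaces = linear span of their union.\<close>
definition is_splitting :: "'N::finite cvec set set \<Rightarrow> 'N cvec set set \<Rightarrow> 'N cvec set set \<Rightarrow> bool" where
  "is_splitting K K1 K2 \<longleftrightarrow> K = K1 \<union> K2 \<and> K1 \<inter> K2 = {} \<and>
      vec.span (centre K1 \<union> centre K2) = UNIV"

definition irreducible_arr :: "'N::finite cvec set set \<Rightarrow> bool" where
  "irreducible_arr K \<longleftrightarrow> \<not> (\<exists>K1 K2. is_splitting K K1 K2 \<and> K1 \<noteq> {} \<and> K2 \<noteq> {})"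

definition intersections :: "'N::finite cvec set set \<Rightarrow> 'N cvec set set" where
  "intersections \<H> = {\<Inter> S | S. S \<subseteq> \<H> \<and> S \<noteq> {} \<and> \<Inter> S \<noteq> {0} \<and> \<Inter> S \<noteq> UNIV}"

definition localization :: "'N::finite cvec set set \<Rightarrow> 'N cvec set \<Rightarrow> 'N cvec set set" where
  "localization \<H> L = {H \<in> \<H>. L \<subseteq> H}"

definition irreducible_intersections :: "'N::finite cvec set set \<Rightarrow> 'N cvec set set" where
  "irreducible_intersections \<H> = {L \<in> intersections \<H>. irreducible_arr (localization \<H> L)}"

end

theory Submission
  imports Defs
begin

lemma dimU: "vec.dim (UNIV :: 'N::finite cvec set) = CARD('N)"
  by (simp add: card_cart_basis)

lemma dim_le: "vec.dim (S :: 'N::finite cvec set) \<le> CARD('N)"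
  using vec.dim_subset[of S UNIV] dimU by (metis subset_UNIV)

lemma hyp_ne_UNIV:
  assumes "proj_hyperplane (H :: 'N::finite cvec set)" shows "H \<noteq> UNIV"
proof
  assume "H = UNIV"
  with assms have "CARD('N) = CARD('N) - 1" by (simp add: proj_hyperplane_def card_cart_basis)
  moreover have "CARD('N) > 0" by simp
  ultimately show False by linarith
qed

lemma codim_split:
  fixes T1 T2 :: "'N::finite cvec set"
  assumes "vec.subspace T1" "vec.subspace T2" "vec.span (T1 \<union> T2) = UNIV"
  shows "codim (T1 \<inter> T2) = codim T1 + codim T2"
proof -
  have "vec.span (T1 \<union> T2) = {x + y |x y. x \<in> T1 \<and> y \<in> T2}"
  proof -
    have e1: "vec.span T1 = T1" by (rule vec.span_eq_iff[THEN iffD2, OF assms(1)])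
    have e2: "vec.span T2 = T2" by (rule vec.span_eq_iff[THEN iffD2, OF assms(2)])
    show ?thesis using vec.span_Un[of T1 T2] unfolding e1 e2 .
  qed
  with assms have "{x + y |x y. x \<in> T1 \<and> y \<in> T2} = UNIV" by simp
  with vec.dim_sums_Int[OF assms(1,2)] have
    "CARD('N) + vec.dim (T1 \<inter> T2) = vec.dim T1 + vec.dim T2" by (simp add: card_cart_basis)
  with dim_le[of T1] dim_le[of T2] dim_le[of "T1 \<inter> T2"] show ?thesis
    unfolding codim_def by linarith
qed

lemma int_props:
  fixes \<H> :: "'N::finite cvec set set"
  assumes hyp: "\<forall>H\<in>\<H>. proj_hyperplane H" and L: "L \<in> intersections \<H>"
  shows "L = \<Inter>(localization \<H> L)" "localization \<H> L \<noteq> {}" "vec.subspace L"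
    "L \<noteq> {0}" "L \<noteq> UNIV"
proof -
  obtain S where S: "L = \<Inter>S" "S \<subseteq> \<H>" "S \<noteq> {}" "\<Inter> S \<noteq> {0}" "\<Inter> S \<noteq> UNIV"
    using L by (auto simp: intersections_def)
  have "S \<subseteq> localization \<H> L" using S by (auto simp: localization_def)
  then show "L = \<Inter>(localization \<H> L)" "localization \<H> L \<noteq> {}"
    using S by (auto simp: localization_def)
  show "vec.subspace L" using S hyp
    by (metis subsetD proj_hyperplane_def vec.subspace_Inter)
  show "L \<noteq> {0}" "L \<noteq> UNIV" using S by auto
qed

lemma key:
  fixes \<H> :: "'N::finite cvec set set" and a :: "'N cvec set \<Rightarrow> real"
  assumes fin: "finite \<H>" and hyp: "\<forall>H\<in>\<H>. proj_hyperplane H"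
    and irr: "\<forall>L\<in>irreducible_intersections \<H>. (\<Sum>H\<in>localization \<H> L. a H) < real (codim L)"
  shows "L \<in> intersections \<H> \<Longrightarrow> (\<Sum>H\<in>localization \<H> L. a H) < real (codim L)"
proof (induction "card (localization \<H> L)" arbitrary: L rule: less_induct)
  case less
  note P = int_props[OF hyp less.prems]
  show ?case
  proof (cases "irreducible_arr (localization \<H> L)")
    case True then show ?thesis using irr less.prems by (auto simp: irreducible_intersections_def)
  next
    case False
    then obtain K1 K2 where sp: "is_splitting (localization \<H> L) K1 K2" "K1 \<noteq> {}" "K2 \<noteq> {}"
      by (auto simp: irreducible_arr_def)
    define T1 where "T1 = \<Inter>K1"
    define T2 where "T2 = \<Inter>K2"
    have U: "localization \<H> L = K1 \<union> K2" and D: "K1 \<inter> K2 = {}"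
      and spn: "vec.span (T1 \<union> T2) = UNIV"
      using sp by (auto simp: is_splitting_def centre_def T1_def T2_def)
    have finl: "finite (localization \<H> L)" using fin by (simp add: localization_def)
    have LT: "L = T1 \<inter> T2" using P(1) U by (auto simp: T1_def T2_def)
    have sub1: "vec.subspace T1" unfolding T1_def using U hyp
      by (intro vec.subspace_Inter) (auto simp: localization_def proj_hyperplane_def)
    have sub2: "vec.subspace T2" unfolding T2_def using U hyp
      by (intro vec.subspace_Inter) (auto simp: localization_def proj_hyperplane_def)
    have gen: "localization \<H> (\<Inter>Ka) = Ka \<and> \<Inter>Ka \<in> intersections \<H>
         \<and> card Ka < card (localization \<H> L)"
      if Ka: "Ka \<noteq> {}" "Kb \<noteq> {}" "localization \<H> L = Ka \<union> Kb" "Ka \<inter> Kb = {}"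
        "vec.span (\<Inter>Ka \<union> \<Inter>Kb) = UNIV" for Ka Kb
    proof -
      have KaH: "Ka \<subseteq> \<H>" "Kb \<subseteq> \<H>" using Ka(3) by (auto simp: localization_def)
      have Lsub: "L \<subseteq> \<Inter>Ka" using Ka(3) by (auto simp: localization_def)
      have loc: "localization \<H> (\<Inter>Ka) = Ka"
      proof
        show "Ka \<subseteq> localization \<H> (\<Inter>Ka)" using KaH by (auto simp: localization_def)
      next
        show "localization \<H> (\<Inter>Ka) \<subseteq> Ka"
        proof
          fix H assume H: "H \<in> localization \<H> (\<Inter>Ka)"
          then have HH: "H \<in> \<H>" "\<Inter>Ka \<subseteq> H" by (auto simp: localization_def)
          then have "H \<in> localization \<H> L" using Lsub by (auto simp: localization_def)
          moreover have "H \<notin> Kb"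
          proof
            assume "H \<in> Kb"
            then have "\<Inter>Ka \<union> \<Inter>Kb \<subseteq> H" using HH by auto
            moreover have "vec.subspace H" using hyp HH by (auto simp: proj_hyperplane_def)
            ultimately have "vec.span (\<Inter>Ka \<union> \<Inter>Kb) \<subseteq> H" by (rule vec.span_minimal)
            then have "H = UNIV" using Ka(5) by auto
            then show False using hyp_ne_UNIV hyp HH by blast
          qed
          ultimately show "H \<in> Ka" using Ka(3) by auto
        qed
      qed
      obtain H0 where H0: "H0 \<in> Ka" using Ka(1) by auto
      have "\<Inter>Ka \<noteq> UNIV" using H0 KaH hyp hyp_ne_UNIV by blast
      moreover have "\<Inter>Ka \<noteq> {0}"
      proof
        assume "\<Inter>Ka = {0}"
        then have "L \<subseteq> {0}" using Lsub by auto
        moreover have "0 \<in> L" using P(3) vec.subspace_0 by blast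
        ultimately show False using P(4) by auto
      qed
      ultimately have "\<Inter>Ka \<in> intersections \<H>" using KaH Ka(1)
        unfolding intersections_def by blast
      moreover have "card Ka < card (localization \<H> L)"
        using Ka finl by (intro psubset_card_mono) auto
      ultimately show ?thesis using loc by blast
    qed
    have g1: "localization \<H> T1 = K1 \<and> T1 \<in> intersections \<H> \<and> card K1 < card (localization \<H> L)"
      unfolding T1_def using gen[of K1 K2] sp(2,3) U D spn by (simp add: T1_def T2_def)
    have g2: "localization \<H> T2 = K2 \<and> T2 \<in> intersections \<H> \<and> card K2 < card (localization \<H> L)"
      unfolding T2_def using gen[of K2 K1] sp(2,3) U D spn by (simp add: T1_def T2_def Un_commute Int_commute)
    have s1: "(\<Sum>H\<in>K1. a H) < real (codim T1)" using less.hyps[of T1] g1 by simp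
    have s2: "(\<Sum>H\<in>K2. a H) < real (codim T2)" using less.hyps[of T2] g2 by simp
    have "(\<Sum>H\<in>localization \<H> L. a H) = (\<Sum>H\<in>K1. a H) + (\<Sum>H\<in>K2. a H)"
      using U D finl by (simp add: sum.union_disjoint)
    moreover have "codim L = codim T1 + codim T2" using LT codim_split[OF sub1 sub2 spn] by simp
    ultimately show ?thesis using s1 s2 by simp
  qed
qed

theorem lemma2p17:
  fixes \<H> :: "'N::finite cvec set set" and a :: "'N cvec set \<Rightarrow> real"
  assumes "finite \<H>"
    and "\<forall>H\<in>\<H>. proj_hyperplane H"
    and "\<forall>H\<in>\<H>. a H > 0"
  shows "((\<forall>L\<in>irreducible_intersections \<H>. (\<Sum>H\<in>localization \<H> L. a H) < real (codim L))
           \<longleftrightarrow> (\<forall>L\<in>intersections \<H>. (\<Sum>H\<in>localization \<H> L. a H) < real (codim L)))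
       \<and> ((\<forall>L\<in>intersections \<H>. (\<Sum>H\<in>localization \<H> L. a H) < real (codim L))
           \<longleftrightarrow> (\<forall>L. proj_subspace L \<and> L \<noteq> UNIV \<longrightarrow>
                   (\<Sum>H\<in>localization \<H> L. a H) < real (codim L)))"
proof (intro conjI iffI)
  assume "\<forall>L\<in>irreducible_intersections \<H>. (\<Sum>H\<in>localization \<H> L. a H) < real (codim L)"
  then show "\<forall>L\<in>intersections \<H>. (\<Sum>H\<in>localization \<H> L. a H) < real (codim L)"
    using key[OF assms(1,2)] by blast
next
  assume "\<forall>L\<in>intersections \<H>. (\<Sum>H\<in>localization \<H> L. a H) < real (codim L)"
  then show "\<forall>L\<in>irreducible_intersections \<H>. (\<Sum>H\<in>localization \<H> L. a H) < real (codim L)"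
    by (auto simp: irreducible_intersections_def)
next
  assume A: "\<forall>L. proj_subspace L \<and> L \<noteq> UNIV \<longrightarrow>
                   (\<Sum>H\<in>localization \<H> L. a H) < real (codim L)"
  show "\<forall>L\<in>intersections \<H>. (\<Sum>H\<in>localization \<H> L. a H) < real (codim L)"
  proof
    fix L assume L: "L \<in> intersections \<H>"
    note P = int_props[OF assms(2) L]
    show "(\<Sum>H\<in>localization \<H> L. a H) < real (codim L)"
      using A P by (auto simp: proj_subspace_def)
  qed
next
  assume A: "\<forall>L\<in>intersections \<H>. (\<Sum>H\<in>localization \<H> L. a H) < real (codim L)"
  show "\<forall>L. proj_subspace L \<and> L \<noteq> UNIV \<longrightarrow>
                   (\<Sum>H\<in>localization \<H> L. a H) < real (codim L)"
  proof (intro allI impI)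
    fix L :: "'N cvec set" assume L: "proj_subspace L \<and> L \<noteq> UNIV"
    then have sL: "vec.subspace L" "L \<noteq> {0}" "L \<noteq> UNIV" by (auto simp: proj_subspace_def)
    have cpos: "codim L > 0"
    proof -
      have "vec.dim L \<noteq> CARD('N)"
      proof
        assume "vec.dim L = CARD('N)"
        then have "vec.span L = UNIV" using vec.dim_eq_full[of L]
          by (simp add: card_cart_basis vec.dimension_def)
        then show False using sL vec.span_eq_iff[of L] by simp
      qed
      then show ?thesis using dim_le[of L] unfolding codim_def by linarith
    qed
    show "(\<Sum>H\<in>localization \<H> L. a H) < real (codim L)"
    proof (cases "localization \<H> L = {}")
      case True then show ?thesis using cpos by simp
    next
      case False
      define M where "M = \<Inter>(localization \<H> L)"
      have LM: "L \<subseteq> M" by (auto simp: M_def localization_def)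
      obtain H0 where H0: "H0 \<in> localization \<H> L" using False by auto
      have "M \<noteq> UNIV" using H0 assms(2) hyp_ne_UNIV by (auto simp: M_def localization_def)
      moreover have "M \<noteq> {0}"
      proof
        assume "M = {0}"
        then have "L \<subseteq> {0}" using LM by auto
        moreover have "0 \<in> L" using sL vec.subspace_0 by blast
        ultimately show False using sL by auto
      qed
      moreover have "localization \<H> L \<subseteq> \<H>" by (auto simp: localization_def)
      ultimately have Mi: "M \<in> intersections \<H>" using False unfolding intersections_def M_def
        by blast
      have locM: "localization \<H> M = localization \<H> L"
        using LM by (auto simp: localization_def M_def)
      have "vec.dim L \<le> vec.dim M" using LM vec.dim_subset by blast
      then have "codim M \<le> codim L" by (simp add: codim_def)
      then show ?thesis using A Mi locM by force
    qed
  qed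
qed

end
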